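(* Let $G$ be a finite almost-median graph and $k\geqslant 0$ an integer. Then $G$ is $k$-regular if and only if $G\cong Q_k$.
   Context: All graphs are finite, simple and undirected. A subgraph $H$ of $G$ is isometric if $d_H(u,v)=d_G(u,v)$ for all $u,v\in V(H)$. A partial cube is a connected graph isomorphic to an isometric subgraph of some hypercube $Q_n$. In a partial cube, the Djoković–Winkler relation $\Theta$ on edges is: for edges $e=uv$, $f=xy$, $e\,\Theta\,f$ iff $d(u,x)+d(v,y)\neq d(u,y)+d(v,x)$; it is an equivalence relation, and $F_{uv}$ denotes the $\Theta$-class of $uv$. Let $W_{uv}=\{w\in V(G): d(u,w)<d(v,w)\}$ and $U_{uv}=\{w\in W_{uv}: w \text{ is incident with an edge of } F_{uv}\}$. A partial cube $G$ is an almost-median graph if for every edge $uv$ the subgraphs induced by $U_{uv}$ and by $U_{vu}$ are isometric subgraphs of $G$. $Q_k$ is the $k$-dimensional hypercube ($Q_0=K_1$). *)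

theory Defs
  imports Main "HOL-Library.Extended_Nat"
begin

definition simple_graph :: "'a set \<Rightarrow> ('a \<Rightarrow> 'a \<Rightarrow> bool) \<Rightarrow> bool" where
  "simple_graph V E \<longleftrightarrow> finite V \<and>
     (\<forall>x y. E x y \<longrightarrow> x \<in> V \<and> y \<in> V \<and> x \<noteq> y \<and> E y x)"

definition walk :: "'a set \<Rightarrow> ('a \<Rightarrow> 'a \<Rightarrow> bool) \<Rightarrow> 'a \<Rightarrow> 'a \<Rightarrow> nat \<Rightarrow> bool" where
  "walk V E u v n \<longleftrightarrow> (\<exists>xs. length xs = Suc n \<and> hd xs = u \<and> last xs = v \<and>
     set xs \<subseteq> V \<and> (\<forall>i<n. E (xs ! i) (xs ! Suc i)))"

text \<open>Graph distance (infinite if no walk exists).\<close>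

definition gdist :: "'a set \<Rightarrow> ('a \<Rightarrow> 'a \<Rightarrow> bool) \<Rightarrow> 'a \<Rightarrow> 'a \<Rightarrow> enat" where
  "gdist V E u v = Inf (enat ` {n. walk V E u v n})"

definition connected_graph :: "'a set \<Rightarrow> ('a \<Rightarrow> 'a \<Rightarrow> bool) \<Rightarrow> bool" where
  "connected_graph V E \<longleftrightarrow> (\<forall>u\<in>V. \<forall>v\<in>V. \<exists>n. walk V E u v n)"

definition isometric_subgraph ::
  "'a set \<Rightarrow> ('a \<Rightarrow> 'a \<Rightarrow> bool) \<Rightarrow> 'a set \<Rightarrow> ('a \<Rightarrow> 'a \<Rightarrow> bool) \<Rightarrow> bool" where
  "isometric_subgraph W F V E \<longleftrightarrow> W \<subseteq> V \<and>
     (\<forall>x y. F x y \<longrightarrow> x \<in> W \<and> y \<in> W \<and> E x y) \<and>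
     (\<forall>u\<in>W. \<forall>v\<in>W. gdist W F u v = gdist V E u v)"

definition induced :: "'a set \<Rightarrow> ('a \<Rightarrow> 'a \<Rightarrow> bool) \<Rightarrow> 'a \<Rightarrow> 'a \<Rightarrow> bool" where
  "induced W E x y \<longleftrightarrow> x \<in> W \<and> y \<in> W \<and> E x y"

definition graph_iso ::
  "'a set \<Rightarrow> ('a \<Rightarrow> 'a \<Rightarrow> bool) \<Rightarrow> 'b set \<Rightarrow> ('b \<Rightarrow> 'b \<Rightarrow> bool) \<Rightarrow> bool" where
  "graph_iso V E W F \<longleftrightarrow> (\<exists>f. bij_betw f V W \<and> (\<forall>u\<in>V. \<forall>v\<in>V. E u v \<longleftrightarrow> F (f u) (f v)))"

definition cube_V :: "nat \<Rightarrow> nat set set" where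
  "cube_V n = Pow {..<n}"

definition cube_E :: "nat \<Rightarrow> nat set \<Rightarrow> nat set \<Rightarrow> bool" where
  "cube_E n x y \<longleftrightarrow> x \<in> cube_V n \<and> y \<in> cube_V n \<and> card ((x - y) \<union> (y - x)) = 1"

definition partial_cube :: "'a set \<Rightarrow> ('a \<Rightarrow> 'a \<Rightarrow> bool) \<Rightarrow> bool" where
  "partial_cube V E \<longleftrightarrow> connected_graph V E \<and>
     (\<exists>n W F. isometric_subgraph W F (cube_V n) (cube_E n) \<and> graph_iso V E W F)"

definition Theta :: "'a set \<Rightarrow> ('a \<Rightarrow> 'a \<Rightarrow> bool) \<Rightarrow> 'a \<times> 'a \<Rightarrow> 'a \<times> 'a \<Rightarrow> bool" where
  "Theta V E e f \<longleftrightarrow> (case e of (u, v) \<Rightarrow> case f of (x, y) \<Rightarrow>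
     E u v \<and> E x y \<and>
     gdist V E u x + gdist V E v y \<noteq> gdist V E u y + gdist V E v x)"

definition W_set :: "'a set \<Rightarrow> ('a \<Rightarrow> 'a \<Rightarrow> bool) \<Rightarrow> 'a \<Rightarrow> 'a \<Rightarrow> 'a set" where
  "W_set V E u v = {w \<in> V. gdist V E u w < gdist V E v w}"

definition U_set :: "'a set \<Rightarrow> ('a \<Rightarrow> 'a \<Rightarrow> bool) \<Rightarrow> 'a \<Rightarrow> 'a \<Rightarrow> 'a set" where
  "U_set V E u v = {w \<in> W_set V E u v.
     \<exists>x y. Theta V E (u, v) (x, y) \<and> (w = x \<or> w = y)}"

definition almost_median :: "'a set \<Rightarrow> ('a \<Rightarrow> 'a \<Rightarrow> bool) \<Rightarrow> bool" where
  "almost_median V E \<longleftrightarrow> partial_cube V E \<and>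
     (\<forall>u v. E u v \<longrightarrow>
        isometric_subgraph (U_set V E u v) (induced (U_set V E u v) E) V E \<and>
        isometric_subgraph (U_set V E v u) (induced (U_set V E v u) E) V E)"

definition regular :: "'a set \<Rightarrow> ('a \<Rightarrow> 'a \<Rightarrow> bool) \<Rightarrow> nat \<Rightarrow> bool" where
  "regular V E k \<longleftrightarrow> (\<forall>v\<in>V. card {w \<in> V. E v w} = k)"

end

theory Submission
  imports Defs
begin

lemma walk_0: "walk V E u v 0 \<longleftrightarrow> u = v \<and> u \<in> V"
  unfolding walk_def
proof
  assume "\<exists>xs. length xs = Suc 0 \<and> hd xs = u \<and> last xs = v \<and> set xs \<subseteq> V \<and> (\<forall>i<0. E (xs ! i) (xs ! Suc i))"
  then obtain xs where "length xs = 1" "hd xs = u" "last xs = v" "set xs \<subseteq> V" by auto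
  then obtain x where "xs = [x]" by (metis One_nat_def length_0_conv length_Suc_conv)
  then show "u = v \<and> u \<in> V" using \<open>hd xs = u\<close> \<open>last xs = v\<close> \<open>set xs \<subseteq> V\<close> by auto
next
  assume "u = v \<and> u \<in> V"
  then show "\<exists>xs. length xs = Suc 0 \<and> hd xs = u \<and> last xs = v \<and> set xs \<subseteq> V \<and> (\<forall>i<0. E (xs ! i) (xs ! Suc i))"
    by (intro exI[of _ "[u]"]) auto
qed

lemma walk_Suc: "walk V E u v (Suc m) \<longleftrightarrow> u \<in> V \<and> (\<exists>w. E u w \<and> walk V E w v m)"
proof
  assume "walk V E u v (Suc m)"
  then obtain xs where xs: "length xs = Suc (Suc m)" "hd xs = u" "last xs = v" "set xs \<subseteq> V"
    "\<forall>i<Suc m. E (xs ! i) (xs ! Suc i)" unfolding walk_def by blast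
  then obtain x ys where xys: "xs = x # ys" by (cases xs) auto
  have "ys \<noteq> []" using xs xys by auto
  have "E u (hd ys)" using xs(5)[rule_format, of 0] xys xs(2) \<open>ys \<noteq> []\<close> by (simp add: hd_conv_nth)
  moreover have "walk V E (hd ys) v m"
    unfolding walk_def
  proof (intro exI[of _ ys] conjI)
    show "length ys = Suc m" using xs xys by auto
    show "last ys = v" using xs xys \<open>ys \<noteq> []\<close> by auto
    show "set ys \<subseteq> V" using xs xys by auto
    show "\<forall>i<m. E (ys ! i) (ys ! Suc i)"
    proof (intro allI impI)
      fix i assume "i < m"
      then show "E (ys ! i) (ys ! Suc i)" using xs(5)[rule_format, of "Suc i"] xys by auto
    qed
  qed simp
  moreover have "u \<in> V" using xs xys by auto
  ultimately show "u \<in> V \<and> (\<exists>w. E u w \<and> walk V E w v m)" by blast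
next
  assume "u \<in> V \<and> (\<exists>w. E u w \<and> walk V E w v m)"
  then obtain w ys where u: "u \<in> V" "E u w" and ys: "length ys = Suc m" "hd ys = w" "last ys = v" "set ys \<subseteq> V"
    "\<forall>i<m. E (ys ! i) (ys ! Suc i)" unfolding walk_def by blast
  have "ys \<noteq> []" using ys by auto
  show "walk V E u v (Suc m)"
    unfolding walk_def
  proof (intro exI[of _ "u # ys"] conjI)
    show "\<forall>i<Suc m. E ((u # ys) ! i) ((u # ys) ! Suc i)"
    proof (intro allI impI)
      fix i assume "i < Suc m"
      then show "E ((u # ys) ! i) ((u # ys) ! Suc i)"
        using ys u \<open>ys \<noteq> []\<close> by (cases i) (auto simp: hd_conv_nth)
    qed
  qed (use ys u \<open>ys \<noteq> []\<close> in auto)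
qed

lemma walk_in: "walk V E u v m \<Longrightarrow> u \<in> V \<and> v \<in> V"
proof (induction m arbitrary: u)
  case 0 then show ?case by (auto simp add: walk_0)
next
  case (Suc m) then show ?case by (auto simp: walk_Suc)
qed

lemma gdist_le: "walk V E u v m \<Longrightarrow> gdist V E u v \<le> enat m"
  unfolding gdist_def by (rule Inf_lower) auto

lemma gdist_walk: "gdist V E u v = enat d \<Longrightarrow> walk V E u v d"
proof -
  assume h: "gdist V E u v = enat d"
  let ?A = "enat ` {n. walk V E u v n}"
  have "?A \<noteq> {}" using h unfolding gdist_def Inf_enat_def by (auto split: if_splits)
  then have "Inf ?A \<in> ?A" unfolding Inf_enat_def by (auto intro: LeastI)
  then show ?thesis using h unfolding gdist_def by auto
qed

lemma gdist_ge: "(\<And>m. walk V E u v m \<Longrightarrow> d \<le> m) \<Longrightarrow> enat d \<le> gdist V E u v"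
  unfolding gdist_def by (rule Inf_greatest) auto

lemma walk_mono: "walk V E u v m \<Longrightarrow> V \<subseteq> V' \<Longrightarrow> (\<And>x y. E x y \<Longrightarrow> E' x y) \<Longrightarrow> walk V' E' u v m"
proof (induction m arbitrary: u)
  case 0 then show ?case by (auto simp: walk_0)
next
  case (Suc m)
  then obtain w where "u \<in> V" "E u w" "walk V E w v m" by (auto simp: walk_Suc)
  moreover have "walk V' E' w v m" using Suc.IH[OF \<open>walk V E w v m\<close>] Suc.prems by blast
  ultimately show ?case using Suc.prems unfolding walk_Suc by blast
qed

definition sd :: "'a set \<Rightarrow> 'a set \<Rightarrow> 'a set" where
  "sd A B = (A - B) \<union> (B - A)"

lemma sd_assoc: "sd (sd A B) C = sd A (sd B C)" by (auto simp: sd_def)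
lemma sd_comm: "sd A B = sd B A" by (auto simp: sd_def)
lemma sd_self[simp]: "sd A A = {}" by (auto simp: sd_def)
lemma sd_empty[simp]: "sd A {} = A" "sd {} A = A" by (auto simp: sd_def)
lemma sd_cancel[simp]: "sd A (sd A B) = B" "sd (sd A B) B = A" "sd (sd B A) B = A" "sd B (sd A B) = A"
  by (auto simp: sd_def)
lemma sd_eq_iff: "sd A B = C \<longleftrightarrow> B = sd A C" by (auto simp: sd_def)
lemma sd_sub: "sd A B \<subseteq> A \<union> B" by (auto simp: sd_def)
lemma sd_fin: "finite A \<Longrightarrow> finite B \<Longrightarrow> finite (sd A B)" by (auto simp: sd_def)
lemma sd_tri: "sd A C \<subseteq> sd A B \<union> sd B C" by (auto simp: sd_def)
lemma sd_insert: "a \<notin> s \<Longrightarrow> sd s {a} = insert a s" by (auto simp: sd_def)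
lemma sd_remove: "a \<in> s \<Longrightarrow> sd s {a} = s - {a}" by (auto simp: sd_def)
lemma sd_mem: "x \<in> sd A B \<longleftrightarrow> (x \<in> A \<longleftrightarrow> x \<notin> B)" by (auto simp: sd_def)

lemma card_sd1: assumes "finite s" shows "int (card (sd s {a})) = int (card s) + (if a \<in> s then -1 else 1)"
proof (cases "a \<in> s")
  case True
  then have "card s \<ge> 1" using \<open>finite s\<close> by (metis One_nat_def Suc_leI card_gt_0_iff empty_iff)
  then show ?thesis using True \<open>finite s\<close> by (simp add: sd_remove card_Diff_singleton of_nat_diff)
next
  case False
  then show ?thesis using \<open>finite s\<close> by (simp add: sd_insert)
qed

lemma cube_E_sd: "cube_E n x y \<longleftrightarrow> x \<in> cube_V n \<and> y \<in> cube_V n \<and> card (sd x y) = 1"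
  by (simp add: cube_E_def sd_def)

lemma card1_sd: "card (sd p q) = 1 \<longleftrightarrow> (\<exists>a. q = sd p {a})"
proof
  assume "card (sd p q) = 1"
  then obtain a where "sd p q = {a}" by (auto simp: card_Suc_eq)
  then show "\<exists>a. q = sd p {a}" by (auto simp: sd_eq_iff)
qed auto

lemma sd_sing_eq: "sd p {a} = sd p {b} \<longleftrightarrow> a = b" by (auto simp: sd_def)

lemma walk_card:
  assumes "walk W F x y m" "\<forall>z\<in>W. finite z" "\<And>u v. F u v \<Longrightarrow> card (sd u v) = 1"
  shows "card (sd x y) \<le> m"
  using assms(1)
proof (induction m arbitrary: x)
  case 0 then show ?case by (simp add: walk_0)
next
  case (Suc m)
  then obtain z where z: "x \<in> W" "F x z" "walk W F z y m" by (auto simp: walk_Suc)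
  have IH: "card (sd z y) \<le> m" using Suc.IH z(3) by blast
  have fin: "finite x" "finite y" "finite z" using z walk_in[OF z(3)] assms(2) by auto
  have "card (sd x y) \<le> card (sd x z \<union> sd z y)"
    using fin by (intro card_mono sd_tri) (auto intro: sd_fin)
  also have "\<dots> \<le> card (sd x z) + card (sd z y)" by (rule card_Un_le)
  finally show ?case using IH assms(3)[OF z(2)] by simp
qed

lemma cube_walk:
  assumes "finite D" "D \<subseteq> {..<n}" "x \<in> cube_V n"
  shows "walk (cube_V n) (cube_E n) x (sd x D) (card D)"
  using assms
proof (induction D arbitrary: x rule: finite_induct)
  case empty then show ?case by (simp add: walk_0)
next
  case (insert d D)
  have x': "sd x {d} \<in> cube_V n" using insert.prems by (auto simp: cube_V_def sd_def)
  have "walk (cube_V n) (cube_E n) (sd x {d}) (sd (sd x {d}) D) (card D)"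
    using insert.IH[OF _ x'] insert.prems by auto
  moreover have "sd (sd x {d}) D = sd x (insert d D)" using insert.hyps by (auto simp: sd_def)
  moreover have "cube_E n x (sd x {d})" using x' insert.prems by (auto simp: cube_E_sd)
  ultimately show ?case using insert.hyps insert.prems by (auto simp: walk_Suc)
qed

lemma gdist_cube:
  assumes "x \<in> cube_V n" "y \<in> cube_V n"
  shows "gdist (cube_V n) (cube_E n) x y = enat (card (sd x y))"
proof (rule antisym)
  have "sd x y \<subseteq> {..<n}" using assms by (auto simp: cube_V_def sd_def)
  then have "walk (cube_V n) (cube_E n) x (sd x (sd x y)) (card (sd x y))"
    by (intro cube_walk) (auto intro: finite_subset assms)
  then show "gdist (cube_V n) (cube_E n) x y \<le> enat (card (sd x y))" by (auto intro: gdist_le)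
  show "enat (card (sd x y)) \<le> gdist (cube_V n) (cube_E n) x y"
  proof (rule gdist_ge)
    fix m assume "walk (cube_V n) (cube_E n) x y m"
    then show "card (sd x y) \<le> m"
      by (rule walk_card) (auto simp: cube_V_def cube_E_sd intro: finite_subset)
  qed
qed

lemma walk_iso:
  assumes bij: "bij_betw f V W" and iso: "\<forall>u\<in>V. \<forall>v\<in>V. E u v \<longleftrightarrow> F (f u) (f v)"
    and Es: "\<And>x y. E x y \<Longrightarrow> x \<in> V \<and> y \<in> V"
    and Fs: "\<And>x y. F x y \<Longrightarrow> x \<in> W \<and> y \<in> W"
    and uv: "u \<in> V" "v \<in> V"
  shows "walk V E u v m \<longleftrightarrow> walk W F (f u) (f v) m"
  using uv(1)
proof (induction m arbitrary: u)
  case 0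
  have "f u = f v \<longleftrightarrow> u = v" using bij 0 uv(2) by (auto simp: bij_betw_def inj_on_def)
  then show ?case using 0 bij by (auto simp: walk_0 bij_betw_def)
next
  case (Suc m)
  show ?case
  proof
    assume "walk V E u v (Suc m)"
    then obtain w where w: "E u w" "walk V E w v m" by (auto simp: walk_Suc)
    have "w \<in> V" using Es[OF w(1)] by auto
    then have "F (f u) (f w)" "walk W F (f w) (f v) m" using iso Suc w by auto
    moreover have "f u \<in> W" using bij Suc.prems by (auto simp: bij_betw_def)
    ultimately show "walk W F (f u) (f v) (Suc m)" by (auto simp: walk_Suc)
  next
    assume "walk W F (f u) (f v) (Suc m)"
    then obtain z where z: "F (f u) z" "walk W F z (f v) m" by (auto simp: walk_Suc)
    have "z \<in> W" using Fs[OF z(1)] by auto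
    then obtain w where w: "w \<in> V" "z = f w" using bij by (auto simp: bij_betw_def)
    then have "E u w" "walk V E w v m" using iso Suc z by auto
    then show "walk V E u v (Suc m)" using Suc.prems by (auto simp: walk_Suc)
  qed
qed

lemma gdist_iso:
  assumes bij: "bij_betw f V W" and iso: "\<forall>u\<in>V. \<forall>v\<in>V. E u v \<longleftrightarrow> F (f u) (f v)"
    and Es: "\<And>x y. E x y \<Longrightarrow> x \<in> V \<and> y \<in> V"
    and Fs: "\<And>x y. F x y \<Longrightarrow> x \<in> W \<and> y \<in> W"
    and uv: "u \<in> V" "v \<in> V"
  shows "gdist V E u v = gdist W F (f u) (f v)"
proof -
  have "{m. walk V E u v m} = {m. walk W F (f u) (f v) m}" using walk_iso[OF assms] by blast
  then show ?thesis unfolding gdist_def by simp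
qed

lemma setup_coords:
  assumes sg: "simple_graph V E" and am: "almost_median V E"
  obtains n W \<phi> where "bij_betw \<phi> V W" "W \<subseteq> cube_V n"
    "\<forall>u\<in>V. \<forall>v\<in>V. E u v \<longleftrightarrow> card (sd (\<phi> u) (\<phi> v)) = 1"
    "\<forall>u\<in>V. \<forall>v\<in>V. gdist V E u v = enat (card (sd (\<phi> u) (\<phi> v)))"
proof -
  from am obtain n W F where iso: "isometric_subgraph W F (cube_V n) (cube_E n)" "graph_iso V E W F"
    unfolding almost_median_def partial_cube_def by blast
  from iso(2) obtain \<phi> where bij: "bij_betw \<phi> V W" and phi: "\<forall>u\<in>V. \<forall>v\<in>V. E u v \<longleftrightarrow> F (\<phi> u) (\<phi> v)"
    unfolding graph_iso_def by blast
  have Wsub: "W \<subseteq> cube_V n" and Fs: "\<And>x y. F x y \<Longrightarrow> x \<in> W \<and> y \<in> W \<and> cube_E n x y"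
    and gd: "\<forall>x\<in>W. \<forall>y\<in>W. gdist W F x y = gdist (cube_V n) (cube_E n) x y"
    using iso(1) unfolding isometric_subgraph_def by auto
  have gdW: "gdist W F x y = enat (card (sd x y))" if "x \<in> W" "y \<in> W" for x y
    using gd that Wsub gdist_cube[of x n y] by auto
  have Fc: "F x y \<longleftrightarrow> card (sd x y) = 1" if "x \<in> W" "y \<in> W" for x y
  proof
    assume "F x y" then show "card (sd x y) = 1" using Fs by (auto simp: cube_E_sd)
  next
    assume "card (sd x y) = 1"
    then have "gdist W F x y = enat (Suc 0)" using gdW that by simp
    then have "walk W F x y (Suc 0)" by (rule gdist_walk)
    then show "F x y" by (auto simp: walk_Suc walk_0)
  qed
  have Es: "\<And>x y. E x y \<Longrightarrow> x \<in> V \<and> y \<in> V" using sg unfolding simple_graph_def by blast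
  have inW: "\<phi> u \<in> W" if "u \<in> V" for u using bij that by (auto simp: bij_betw_def)
  show ?thesis
  proof (rule that[OF bij Wsub])
    show "\<forall>u\<in>V. \<forall>v\<in>V. E u v \<longleftrightarrow> card (sd (\<phi> u) (\<phi> v)) = 1" using phi Fc inW by auto
    show "\<forall>u\<in>V. \<forall>v\<in>V. gdist V E u v = enat (card (sd (\<phi> u) (\<phi> v)))"
      using gdist_iso[OF bij phi Es] Fs gdW inW by auto
  qed
qed

lemma card_sd_two:
  assumes "finite s" "a \<noteq> b"
  shows "card s + card (sd (sd s {a}) {b}) = card (sd s {b}) + card (sd s {a})"
proof -
  have f: "finite (sd s {a})" using assms(1) by (intro sd_fin) auto
  have m: "b \<in> sd s {a} \<longleftrightarrow> b \<in> s" using assms(2) by (auto simp: sd_def)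
  have A: "int (card (sd (sd s {a}) {b})) = int (card (sd s {a})) + (if b \<in> s then -1 else 1)"
    using card_sd1[OF f, of b] unfolding m .
  have B: "int (card (sd s {a})) = int (card s) + (if a \<in> s then -1 else 1)" using card_sd1[OF assms(1)] .
  have C: "int (card (sd s {b})) = int (card s) + (if b \<in> s then -1 else 1)" using card_sd1[OF assms(1)] .
  have "int (card s) + int (card (sd (sd s {a}) {b})) = int (card (sd s {b})) + int (card (sd s {a}))"
    unfolding A B C by simp
  then show ?thesis by linarith
qed

lemma card_sd_same:
  assumes "finite s"
  shows "card s + card s \<noteq> card (sd s {a}) + card (sd s {a})"
proof -
  have B: "int (card (sd s {a})) = int (card s) + (if a \<in> s then -1 else 1)" using card_sd1[OF assms(1)] .
  show ?thesis
  proof (cases "a \<in> s")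
    case True then show ?thesis using B by simp
  next
    case False then show ?thesis using B by simp
  qed
qed

locale coords =
  fixes V :: "'a set" and E :: "'a \<Rightarrow> 'a \<Rightarrow> bool" and \<phi> :: "'a \<Rightarrow> nat set" and W :: "nat set set" and n :: nat
  assumes bij: "bij_betw \<phi> V W" and Wsub: "W \<subseteq> cube_V n"
    and Ec: "\<forall>u\<in>V. \<forall>v\<in>V. E u v \<longleftrightarrow> card (sd (\<phi> u) (\<phi> v)) = 1"
    and gd: "\<forall>u\<in>V. \<forall>v\<in>V. gdist V E u v = enat (card (sd (\<phi> u) (\<phi> v)))"
    and Es: "\<And>x y. E x y \<Longrightarrow> x \<in> V \<and> y \<in> V"
begin

lemma gdu: "x \<in> V \<Longrightarrow> y \<in> V \<Longrightarrow> gdist V E x y = enat (card (sd (\<phi> x) (\<phi> y)))"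
  using gd by blast
lemma Ecu: "x \<in> V \<Longrightarrow> y \<in> V \<Longrightarrow> E x y \<longleftrightarrow> card (sd (\<phi> x) (\<phi> y)) = 1"
  using Ec by blast
lemma inW: "u \<in> V \<Longrightarrow> \<phi> u \<in> W" using bij by (auto simp: bij_betw_def)
lemma finW: "p \<in> W \<Longrightarrow> finite p" using Wsub by (auto simp: cube_V_def intro: finite_subset)
lemma surjW: "p \<in> W \<Longrightarrow> \<exists>u\<in>V. \<phi> u = p" using bij by (auto simp: bij_betw_def)
lemma injV: "u \<in> V \<Longrightarrow> v \<in> V \<Longrightarrow> \<phi> u = \<phi> v \<longleftrightarrow> u = v" using bij by (auto simp: bij_betw_def inj_on_def)

lemma theta_iff:
  assumes "u \<in> V" "v \<in> V" "x \<in> V" "y \<in> V" "\<phi> v = sd (\<phi> u) {a}" "\<phi> y = sd (\<phi> x) {b}"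
  shows "Theta V E (u, v) (x, y) \<longleftrightarrow> a = b"
proof -
  let ?s = "sd (\<phi> u) (\<phi> x)"
  have fin: "finite ?s" using assms(1,3) by (intro sd_fin finW inW)
  have "card (sd (\<phi> u) (\<phi> v)) = 1" "card (sd (\<phi> x) (\<phi> y)) = 1" using assms(5,6) by simp_all
  then have e: "E u v" "E x y" using Ec assms(1-4) by blast+
  have 1: "sd (\<phi> v) (\<phi> y) = sd (sd ?s {a}) {b}" "sd (\<phi> u) (\<phi> y) = sd ?s {b}" "sd (\<phi> v) (\<phi> x) = sd ?s {a}"
    unfolding assms(5,6) by (auto simp: sd_def)
  have g: "gdist V E u x = enat (card ?s)" "gdist V E v y = enat (card (sd (sd ?s {a}) {b}))"
    "gdist V E u y = enat (card (sd ?s {b}))" "gdist V E v x = enat (card (sd ?s {a}))"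
    using gd assms(1-4) 1 by metis+
  have "Theta V E (u, v) (x, y) \<longleftrightarrow> card ?s + card (sd (sd ?s {a}) {b}) \<noteq> card (sd ?s {b}) + card (sd ?s {a})"
    unfolding Theta_def using e g by simp
  also have "\<dots> \<longleftrightarrow> a = b"
  proof (cases "a = b")
    case True then show ?thesis using card_sd_same[OF fin, of b] by simp
  next
    case False then show ?thesis using card_sd_two[OF fin False] by simp
  qed
  finally show ?thesis .
qed

lemma lad:
  assumes am: "almost_median V E"
  shows "\<forall>p q a. p \<in> W \<longrightarrow> sd p {a} \<in> W \<longrightarrow> q \<in> W \<longrightarrow> sd q {a} \<in> W \<longrightarrow> a \<notin> sd p q \<longrightarrow> p \<noteq> q
      \<longrightarrow> (\<exists>e\<in>sd p q. sd p {e} \<in> W \<and> sd (sd p {e}) {a} \<in> W)"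
proof (intro allI impI)
  fix p q a
  assume p: "p \<in> W" and pa: "sd p {a} \<in> W" and q: "q \<in> W" and qa: "sd q {a} \<in> W" and a: "a \<notin> sd p q" and pq: "p \<noteq> q"
  obtain u where u: "u \<in> V" "\<phi> u = p" using surjW[OF p] by blast
  obtain v where v: "v \<in> V" "\<phi> v = sd p {a}" using surjW[OF pa] by blast
  obtain w where w: "w \<in> V" "\<phi> w = q" using surjW[OF q] by blast
  obtain w' where w': "w' \<in> V" "\<phi> w' = sd q {a}" using surjW[OF qa] by blast
  let ?s = "sd p q"
  have fin: "finite ?s" using p q by (intro sd_fin finW)
  have sne: "?s \<noteq> {}" using pq by (auto simp: sd_def)
  have uv: "E u v" using u v by (simp add: Ecu)
  let ?U = "U_set V E u v"
  have thuv: "Theta V E (u, v) (u, v)" using theta_iff[OF u(1) v(1) u(1) v(1)] u v by simp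
  have thww: "Theta V E (u, v) (w, w')" using theta_iff[OF u(1) v(1) w(1) w'(1)] u v w w' by simp
  have s1: "sd (sd p {a}) p = {a}" by (auto simp: sd_def)
  have "gdist V E u u = enat 0" "gdist V E v u = enat 1" using u v s1 by (simp_all add: gdu)
  then have "gdist V E u u < gdist V E v u" by simp
  then have uU: "u \<in> ?U" unfolding U_set_def W_set_def using thuv u(1) by blast
  have c1: "sd (sd p {a}) q = insert a ?s" using a by (auto simp: sd_def)
  have "gdist V E u w = enat (card ?s)" "gdist V E v w = enat (Suc (card ?s))"
    using u v w c1 fin a by (simp_all add: gdu)
  then have "gdist V E u w < gdist V E v w" by simp
  then have wU: "w \<in> ?U" unfolding U_set_def W_set_def using thww w(1) by blast
  have iso: "isometric_subgraph ?U (induced ?U E) V E" using am uv unfolding almost_median_def by blast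
  then have "gdist ?U (induced ?U E) u w = gdist V E u w" using uU wU unfolding isometric_subgraph_def by blast
  also have "\<dots> = enat (card ?s)" using u w by (simp add: gdu)
  finally have g: "gdist ?U (induced ?U E) u w = enat (card ?s)" .
  obtain m where m: "card ?s = Suc m" using sne fin by (cases "card ?s") auto
  have "walk ?U (induced ?U E) u w (Suc m)" using gdist_walk[OF g] m by simp
  then obtain y where y: "induced ?U E u y" "walk ?U (induced ?U E) y w m" by (auto simp: walk_Suc)
  have yU: "y \<in> ?U" and uy: "E u y" using y(1) by (auto simp: induced_def)
  have yV: "y \<in> V" using Es[OF uy] by simp
  have Usub: "?U \<subseteq> V" by (auto simp: U_set_def W_set_def)
  have "walk V E y w m" using walk_mono[OF y(2) Usub] by (auto simp: induced_def)
  then have "gdist V E y w \<le> enat m" by (rule gdist_le)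
  then have le: "card (sd (\<phi> y) q) \<le> m" using yV w by (simp add: gdu)
  have "card (sd p (\<phi> y)) = 1" using Ecu[OF u(1) yV] uy u(2) by simp
  then obtain e where e: "\<phi> y = sd p {e}" unfolding card1_sd by blast
  have eS: "e \<in> ?s"
  proof (rule ccontr)
    assume "e \<notin> ?s"
    then have "sd (sd p {e}) q = insert e ?s" by (auto simp: sd_def)
    then show False using le e m fin \<open>e \<notin> ?s\<close> by simp
  qed
  from yU obtain x1 y1 where th: "Theta V E (u, v) (x1, y1)" and xy: "y = x1 \<or> y = y1"
    unfolding U_set_def by blast
  have "E x1 y1" using th unfolding Theta_def prod.case by (elim conjE)
  then have x1: "x1 \<in> V" and y1: "y1 \<in> V" using Es by blast+
  then have c: "card (sd (\<phi> x1) (\<phi> y1)) = 1" using Ecu \<open>E x1 y1\<close> by blast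
  then obtain b where b: "\<phi> y1 = sd (\<phi> x1) {b}" unfolding card1_sd by blast
  have "a = b" using theta_iff[OF u(1) v(1) x1 y1 v(2)[unfolded u(2)[symmetric]] b] th by simp
  have "sd (\<phi> y) {a} \<in> W"
  proof (cases "y = x1")
    case True then show ?thesis using b \<open>a = b\<close> inW[OF y1] by simp
  next
    case False then have "y = y1" using xy by simp
    then show ?thesis using b \<open>a = b\<close> inW[OF x1] by simp
  qed
  moreover have "sd p {e} \<in> W" using e inW[OF yV] by simp
  ultimately show "\<exists>e\<in>sd p q. sd p {e} \<in> W \<and> sd (sd p {e}) {a} \<in> W" using eS e by auto
qed

end

definition C :: "(nat \<Rightarrow> nat set) \<Rightarrow> nat \<Rightarrow> nat set" where
  "C w j = sd (w j) (w (Suc j))"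

definition bw :: "nat set set \<Rightarrow> (nat \<Rightarrow> nat set) \<Rightarrow> nat \<Rightarrow> bool" where
  "bw W w M \<longleftrightarrow> (\<forall>j\<le>M. w j \<in> W) \<and> (\<forall>j<M. card (C w j) = 1)
     \<and> (\<forall>j. Suc j < M \<longrightarrow> sd (w j) (C w (Suc j)) \<notin> W)"

lemma C_sing: "card (C w j) = 1 \<Longrightarrow> \<exists>c. C w j = {c}"
  by (auto simp: card_Suc_eq)

lemma path_union:
  assumes inj: "inj_on (C w) {i..<j}" and cs: "\<forall>t<j. card (C w t) = 1" and ij: "i \<le> j"
  shows "sd (w i) (w j) = \<Union> (C w ` {i..<j})"
  using ij inj cs
proof (induction j)
  case 0 then show ?case by simp
next
  case (Suc j)
  show ?case
  proof (cases "i = Suc j")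
    case True then show ?thesis by simp
  next
    case False
    then have ij: "i \<le> j" using Suc.prems by simp
    have inj': "inj_on (C w) {i..<j}" using Suc.prems(2) by (rule inj_on_subset) auto
    have IH: "sd (w i) (w j) = \<Union> (C w ` {i..<j})" using Suc.IH[OF ij inj'] Suc.prems(3) by simp
    obtain c where c: "C w j = {c}" using C_sing Suc.prems(3) by blast
    have cn: "c \<notin> \<Union> (C w ` {i..<j})"
    proof
      assume "c \<in> \<Union> (C w ` {i..<j})"
      then obtain t where t: "t \<in> {i..<j}" "c \<in> C w t" by blast
      obtain c' where c': "C w t = {c'}" using C_sing Suc.prems(3) t(1) by fastforce
      then have "C w t = C w j" using t(2) c by simp
      then have "t = j" using Suc.prems(2) t(1) ij unfolding inj_on_def by fastforce
      then show False using t(1) by simp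
    qed
    have "sd (w i) (w (Suc j)) = sd (sd (w i) (w j)) (C w j)" unfolding C_def by (simp add: sd_assoc)
    also have "\<dots> = insert c (\<Union> (C w ` {i..<j}))" using IH c cn by (simp add: sd_insert)
    also have "\<dots> = \<Union> (C w ` {i..<Suc j})" using c ij by (auto simp: atLeastLessThanSuc)
    finally show ?thesis .
  qed
qed


definition LAD :: "nat set set \<Rightarrow> bool" where
  "LAD W \<longleftrightarrow> (\<forall>p q a. p \<in> W \<longrightarrow> sd p {a} \<in> W \<longrightarrow> q \<in> W \<longrightarrow> sd q {a} \<in> W \<longrightarrow> a \<notin> sd p q \<longrightarrow> p \<noteq> q
      \<longrightarrow> (\<exists>e\<in>sd p q. sd p {e} \<in> W \<and> sd (sd p {e}) {a} \<in> W))"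

lemma sd_alg1: "sd (sd A {e}) (sd A B) = sd B {e}" by (auto simp: sd_def)

lemma chain_step:
  assumes IH: "\<And>M' w'. M' < M \<Longrightarrow> 2 \<le> M' \<Longrightarrow> bw W w' M' \<Longrightarrow> C w' 0 = C w' (M' - 1) \<Longrightarrow> inj_on (C w') {..<M' - 1} \<Longrightarrow> False"
    and bw: "bw W w M" and inj: "inj_on (C w) {..<M - 1}"
    and r: "2 \<le> r" "r < M - 1" and Cr: "C w r = {e}"
    and j: "1 \<le> j" "j \<le> r - 2" and wj: "sd (w j) {e} \<in> W"
  shows "sd (w (Suc j)) {e} \<in> W"
proof (rule ccontr)
  assume H0: "sd (w (Suc j)) {e} \<notin> W"
  have vs: "\<And>t. t \<le> M \<Longrightarrow> w t \<in> W" and cs: "\<And>t. t < M \<Longrightarrow> card (C w t) = 1"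
    and bs: "\<And>t. Suc t < M \<Longrightarrow> sd (w t) (C w (Suc t)) \<notin> W" using bw unfolding bw_def by auto
  define w' where "w' = (\<lambda>t. if t = 0 then sd (w j) {e} else w (j + t - 1))"
  define M' where "M' = r - j + 2"
  have M'M: "M' < M" and M'2: "2 \<le> M'" using r j unfolding M'_def by auto
  have w'0: "w' 0 = sd (w j) {e}" unfolding w'_def by simp
  have w't: "\<And>t. t \<ge> 1 \<Longrightarrow> w' t = w (j + t - 1)" unfolding w'_def by simp
  have C0: "C w' 0 = {e}" unfolding C_def using w'0 w't[of 1] by (simp add: sd_def, blast)
  have Ct: "\<And>t. t \<ge> 1 \<Longrightarrow> C w' t = C w (j + t - 1)"
  proof -
    fix t :: nat assume "t \<ge> 1"
    then have "w' t = w (j + t - 1)" "w' (Suc t) = w (Suc (j + t - 1))" using w't[of t] w't[of "Suc t"] by auto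
    then show "C w' t = C w (j + t - 1)" unfolding C_def by simp
  qed
  have C1: "C w' 1 = C w j" using Ct[of 1] by simp
  have H: "sd (w' 0) (C w' 1) \<notin> W" using H0 w'0 C1 unfolding C_def by (simp add: sd_alg1)
  have last: "C w' (M' - 1) = C w' 0"
    using Ct[of "M' - 1"] C0 Cr r j unfolding M'_def by (simp add: algebra_simps)
  define g where "g = (\<lambda>t. if t = 0 then r else j + t - 1)"
  have Cg: "\<And>t. C w' t = C w (g t)"
  proof -
    fix t show "C w' t = C w (g t)"
    proof (cases "t = 0")
      case True then show ?thesis using C0 Cr unfolding g_def by simp
    next
      case False then show ?thesis using Ct[of t] unfolding g_def by simp
    qed
  qed
  have ginj: "inj_on g {..<M' - 1}"
  proof (rule inj_onI)
    fix x y assume x: "x \<in> {..<M' - 1}" and y: "y \<in> {..<M' - 1}" and gxy: "g x = g y"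
    show "x = y" using x y gxy r j unfolding g_def M'_def by (auto split: if_splits)
  qed
  have gsub: "g ` {..<M' - 1} \<subseteq> {..<M - 1}" using r j unfolding g_def M'_def by auto
  have inj': "inj_on (C w') {..<M' - 1}"
  proof -
    have "inj_on (C w \<circ> g) {..<M' - 1}"
      by (rule comp_inj_on[OF ginj]) (rule inj_on_subset[OF inj gsub])
    moreover have "C w \<circ> g = C w'" using Cg by (auto simp: fun_eq_iff)
    ultimately show ?thesis by simp
  qed
  have bw': "bw W w' M'"
    unfolding bw_def
  proof (intro conjI allI impI)
    fix t assume t: "t \<le> M'"
    show "w' t \<in> W"
    proof (cases "t = 0")
      case True then show ?thesis using w'0 wj by simp
    next
      case False then show ?thesis using w't[of t] vs[of "j + t - 1"] t r j unfolding M'_def by simp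
    qed
  next
    fix t assume t: "t < M'"
    show "card (C w' t) = 1"
    proof (cases "t = 0")
      case True then show ?thesis using C0 by simp
    next
      case False then show ?thesis using Ct[of t] cs[of "j + t - 1"] t r j unfolding M'_def by simp
    qed
  next
    fix t assume t: "Suc t < M'"
    show "sd (w' t) (C w' (Suc t)) \<notin> W"
    proof (cases "t = 0")
      case True then show ?thesis using H by simp
    next
      case False
      have e1: "w' t = w (j + t - 1)" using w't[of t] False by simp
      have e2: "C w' (Suc t) = C w (Suc (j + t - 1))" using Ct[of "Suc t"] False by simp
      have "Suc (j + t - 1) < M" using t r j False unfolding M'_def by simp
      then show ?thesis using bs e1 e2 by simp
    qed
  qed
  show False using IH[OF M'M M'2 bw' _ inj'] last by simp
qed


lemma no_rep:
  assumes lad: "LAD W"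
  shows "2 \<le> M \<Longrightarrow> bw W w M \<Longrightarrow> C w 0 = C w (M - 1) \<Longrightarrow> inj_on (C w) {..<M - 1} \<Longrightarrow> False"
proof (induction M arbitrary: w rule: less_induct)
  case (less M w)
  have vs: "\<And>t. t \<le> M \<Longrightarrow> w t \<in> W" and cs: "\<And>t. t < M \<Longrightarrow> card (C w t) = 1"
    and bs: "\<And>t. Suc t < M \<Longrightarrow> sd (w t) (C w (Suc t)) \<notin> W" using less.prems(2) unfolding bw_def by auto
  have rep: "C w 0 = C w (M - 1)" and inj: "inj_on (C w) {..<M - 1}" using less.prems by auto
  show False
  proof (cases "M = 2")
    case True
    then have "C w 0 = C w 1" using rep by simp
    moreover have "sd (w 0) (C w 0) = w 1" unfolding C_def by simp
    ultimately show False using bs[of 0] vs[of 1] True by simp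
  next
    case False
    then have M3: "3 \<le> M" using less.prems(1) by simp
    obtain a where a: "C w 0 = {a}" using cs[of 0] C_sing M3 by fastforce
    have aM: "C w (M - 1) = {a}" using rep a by simp
    have pa: "sd (w 1) {a} = w 0" using a[symmetric] unfolding C_def by simp
    have SM: "Suc (M - 1) = M" using M3 by simp
    have qa: "sd (w (M - 1)) {a} = w M" using aM[symmetric] unfolding C_def SM by simp
    have inj1: "inj_on (C w) {1..<M - 1}" by (rule inj_on_subset[OF inj]) auto
    have S: "sd (w 1) (w (M - 1)) = \<Union> (C w ` {1..<M - 1})"
      by (rule path_union[OF inj1]) (use cs M3 in auto)
    have aS: "a \<notin> sd (w 1) (w (M - 1))"
    proof
      assume "a \<in> sd (w 1) (w (M - 1))"
      then obtain t where t: "t \<in> {1..<M - 1}" "a \<in> C w t" using S by auto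
      obtain c where "C w t = {c}" using C_sing cs[of t] t(1) by fastforce
      then have "C w t = C w 0" using t(2) a by simp
      moreover have "t \<in> {..<M - 1}" "0 \<in> {..<M - 1}" using t(1) by auto
      ultimately have "t = 0" using inj unfolding inj_on_def by blast
      then show False using t(1) by simp
    qed
    have pq: "w 1 \<noteq> w (M - 1)"
    proof
      assume "w 1 = w (M - 1)"
      then have "\<Union> (C w ` {1..<M - 1}) = {}" using S by simp
      moreover have "1 \<in> {1..<M - 1}" using M3 by simp
      moreover have "C w 1 \<noteq> {}" using cs[of 1] M3 by auto
      ultimately show False by blast
    qed
    have lad': "\<And>p q a. p \<in> W \<Longrightarrow> sd p {a} \<in> W \<Longrightarrow> q \<in> W \<Longrightarrow> sd q {a} \<in> W \<Longrightarrow> a \<notin> sd p q \<Longrightarrow> p \<noteq> q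
      \<Longrightarrow> (\<exists>e\<in>sd p q. sd p {e} \<in> W \<and> sd (sd p {e}) {a} \<in> W)" using lad unfolding LAD_def by blast
    have w1: "w 1 \<in> W" "sd (w 1) {a} \<in> W" "w (M - 1) \<in> W" "sd (w (M - 1)) {a} \<in> W" using vs[of 1] vs[of 0] vs[of "M - 1"] vs[of M] pa qa M3 by auto
    obtain e where e: "e \<in> sd (w 1) (w (M - 1))" "sd (w 1) {e} \<in> W" "sd (sd (w 1) {e}) {a} \<in> W"
      using lad'[OF w1 aS pq] by blast
    obtain r where r: "r \<in> {1..<M - 1}" "e \<in> C w r" using e(1) S by auto
    have Cr: "C w r = {e}" using C_sing[of w r] cs[of r] r by fastforce
    have r1: "r \<noteq> 1"
    proof
      assume "r = 1"
      then have "sd (w 0) (C w 1) = sd (sd (w 1) {e}) {a}" using Cr pa[symmetric] by (auto simp: sd_def)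
      then show False using bs[of 0] e(3) M3 by simp
    qed
    have r2: "2 \<le> r" "r < M - 1" using r r1 by auto
    have chain: "\<forall>i. i \<le> r - 2 \<longrightarrow> sd (w (Suc i)) {e} \<in> W"
    proof
      fix i show "i \<le> r - 2 \<longrightarrow> sd (w (Suc i)) {e} \<in> W"
      proof (induction i)
        case 0 then show ?case using e(2) by simp
      next
        case (Suc i)
        show ?case
        proof
          assume h: "Suc i \<le> r - 2"
          then have "sd (w (Suc i)) {e} \<in> W" using Suc.IH by simp
          then show "sd (w (Suc (Suc i))) {e} \<in> W"
            using chain_step[of M W w, OF less.IH less.prems(2) inj r2 Cr _ _] h by simp
        qed
      qed
    qed
    have "sd (w (r - 1)) {e} \<in> W" using chain[rule_format, of "r - 2"] r2 by (simp add: Suc_diff_Suc numeral_2_eq_2)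
    moreover have "sd (w (r - 1)) (C w r) \<notin> W" using bs[of "r - 1"] r2 by simp
    ultimately show False using Cr by simp
  qed
qed

definition REG :: "nat set set \<Rightarrow> nat \<Rightarrow> bool" where
  "REG W k \<longleftrightarrow> (\<forall>p\<in>W. card {q\<in>W. card (sd p q) = 1} = k)"

lemma extend:
  assumes fin: "finite W" and reg: "REG W k"
    and w: "w0 \<in> W" "w1 \<in> W" "w2 \<in> W" "card (sd w0 w1) = 1" "card (sd w1 w2) = 1" "sd w0 (sd w1 w2) \<notin> W"
  shows "\<exists>w3\<in>W. card (sd w2 w3) = 1 \<and> sd w1 (sd w2 w3) \<notin> W"
proof -
  define A where "A = sd w1 w2"
  define N1 where "N1 = {q\<in>W. card (sd w1 q) = 1}"
  define N2 where "N2 = {q\<in>W. card (sd w2 q) = 1}"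
  define P where "P = {x. sd x A \<in> W}"
  have i1: "\<And>x. sd w2 (sd x A) = sd x w1" unfolding A_def by (auto simp: sd_def)
  have i2: "\<And>x. sd w1 (sd x A) = sd x w2" unfolding A_def by (auto simp: sd_def)
  have bij: "bij_betw (\<lambda>x. sd x A) (N1 \<inter> P) (N2 \<inter> P)"
  proof (rule bij_betw_byWitness[where f'="\<lambda>x. sd x A"])
    show "\<forall>a\<in>N1 \<inter> P. sd (sd a A) A = a" by simp
    show "\<forall>a\<in>N2 \<inter> P. sd (sd a A) A = a" by simp
    show "(\<lambda>x. sd x A) ` (N1 \<inter> P) \<subseteq> N2 \<inter> P"
      unfolding N1_def N2_def P_def using i1 by (auto simp: sd_comm)
    show "(\<lambda>x. sd x A) ` (N2 \<inter> P) \<subseteq> N1 \<inter> P"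
      unfolding N1_def N2_def P_def using i2 by (auto simp: sd_comm)
  qed
  then have cI: "card (N1 \<inter> P) = card (N2 \<inter> P)" by (rule bij_betw_same_card)
  have f1: "finite N1" "finite N2" using fin unfolding N1_def N2_def by auto
  have k: "card N1 = k" "card N2 = k" using reg w unfolding REG_def N1_def N2_def by auto
  have "card (N1 - P) = card N1 - card (N1 \<inter> P)" using f1 by (simp add: card_Diff_subset_Int)
  moreover have "card (N2 - P) = card N2 - card (N2 \<inter> P)" using f1 by (simp add: card_Diff_subset_Int)
  moreover have "w0 \<in> N1 - P" using w unfolding N1_def P_def A_def by (simp add: sd_comm)
  then have "card (N1 - P) > 0" using f1 by (auto simp: card_gt_0_iff)
  ultimately have "card (N2 - P) > 0" using cI k by simp
  then obtain w3 where w3: "w3 \<in> N2 - P" by (auto simp: card_gt_0_iff)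
  have "sd w1 (sd w2 w3) = sd w3 A" unfolding A_def by (auto simp: sd_def)
  then show ?thesis using w3 unfolding N2_def P_def by auto
qed


lemma C_shift: "C (\<lambda>t. w (s + t)) t = C w (s + t)" unfolding C_def by simp

lemma bw_shift: assumes "bw W w M" "s \<le> M" shows "bw W (\<lambda>t. w (s + t)) (M - s)"
  unfolding bw_def C_shift
proof (intro conjI allI impI)
  fix j assume "j \<le> M - s" then show "w (s + j) \<in> W" using assms unfolding bw_def by simp
next
  fix j assume "j < M - s" then show "card (C w (s + j)) = 1" using assms unfolding bw_def by simp
next
  fix j assume j: "Suc j < M - s"
  have "Suc (s + j) < M" using j by simp
  then have "sd (w (s + j)) (C w (Suc (s + j))) \<notin> W" using assms unfolding bw_def by blast
  then show "sd (w (s + j)) (C w (s + Suc j)) \<notin> W" by simp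
qed

lemma gen:
  assumes fin: "finite W" and reg: "REG W k" and lad: "LAD W"
    and w: "w0 \<in> W" "w1 \<in> W" "w2 \<in> W" "card (sd w0 w1) = 1" "card (sd w1 w2) = 1" "sd w0 (sd w1 w2) \<notin> W"
  shows "2 \<le> M \<Longrightarrow> \<exists>w. bw W w M \<and> inj_on (C w) {..<M}"
proof (induction M rule: nat_induct_at_least)
  case base
  define w where "w = (\<lambda>t::nat. if t = 0 then w0 else if t = 1 then w1 else w2)"
  have C0: "C w 0 = sd w0 w1" and C1: "C w 1 = sd w1 w2" unfolding C_def w_def by auto
  have "bw W w 2"
    unfolding bw_def
  proof (intro conjI allI impI)
    fix j :: nat assume "j \<le> 2" then show "w j \<in> W" using w unfolding w_def by auto
  next
    fix j :: nat assume "j < 2" then have "j = 0 \<or> j = 1" by auto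
    then show "card (C w j) = 1" using C0 C1 w by auto
  next
    fix j :: nat assume "Suc j < 2" then have "j = 0" by simp
    then show "sd (w j) (C w (Suc j)) \<notin> W" using C1 w unfolding w_def by simp
  qed
  moreover have "C w 0 \<noteq> C w 1"
  proof
    assume "C w 0 = C w 1"
    then have "sd w0 (sd w1 w2) = w1" using C0 C1 by (metis sd_cancel(1))
    then show False using w by simp
  qed
  then have "inj_on (C w) {..<2}" by (auto simp: inj_on_def less_2_cases_iff)
  ultimately show ?case by blast
next
  case (Suc M)
  then obtain w where bw: "bw W w M" and inj: "inj_on (C w) {..<M}" by blast
  have vs: "\<And>t. t \<le> M \<Longrightarrow> w t \<in> W" and cs: "\<And>t. t < M \<Longrightarrow> card (C w t) = 1"
    and bs: "\<And>t. Suc t < M \<Longrightarrow> sd (w t) (C w (Suc t)) \<notin> W" using bw unfolding bw_def by auto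
  have M2: "2 \<le> M" by fact
  have e1: "Suc (M - 2) = M - 1" "Suc (M - 1) = M" using M2 by auto
  have a1: "card (sd (w (M - 2)) (w (M - 1))) = 1" using cs[of "M - 2"] M2 e1 unfolding C_def by simp
  have a2: "card (sd (w (M - 1)) (w M)) = 1" using cs[of "M - 1"] M2 e1 unfolding C_def by simp
  have a3: "sd (w (M - 2)) (sd (w (M - 1)) (w M)) \<notin> W" using bs[of "M - 2"] M2 e1 unfolding C_def by simp
  obtain x where x: "x \<in> W" "card (sd (w M) x) = 1" "sd (w (M - 1)) (sd (w M) x) \<notin> W"
    using extend[OF fin reg vs vs vs a1 a2 a3] by auto
  define w' where "w' = w(Suc M := x)"
  have Cw': "\<And>j. j < M \<Longrightarrow> C w' j = C w j" unfolding w'_def C_def by auto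
  have CM: "C w' M = sd (w M) x" unfolding w'_def C_def by simp
  have bw': "bw W w' (Suc M)"
    unfolding bw_def
  proof (intro conjI allI impI)
    fix j assume j: "j \<le> Suc M"
    show "w' j \<in> W"
    proof (cases "j = Suc M")
      case True then show ?thesis using x unfolding w'_def by simp
    next
      case False then show ?thesis using vs[of j] j unfolding w'_def by simp
    qed
  next
    fix j assume j: "j < Suc M"
    show "card (C w' j) = 1"
    proof (cases "j = M")
      case True then show ?thesis using CM x by simp
    next
      case False then show ?thesis using cs[of j] Cw'[of j] j by simp
    qed
  next
    fix j assume j: "Suc j < Suc M"
    show "sd (w' j) (C w' (Suc j)) \<notin> W"
    proof (cases "Suc j = M")
      case True
      then have "w' j = w (M - 1)" unfolding w'_def by auto
      then show ?thesis using True CM x by simp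
    next
      case False
      then have "w' j = w j" "C w' (Suc j) = C w (Suc j)" using j Cw' unfolding w'_def by auto
      then show ?thesis using bs[of j] j False by simp
    qed
  qed
  have notin: "C w' M \<notin> C w' ` {..<M}"
  proof
    assume "C w' M \<in> C w' ` {..<M}"
    then obtain s where s: "s < M" "C w' M = C w' s" by auto
    define w'' where "w'' = (\<lambda>t. w' (s + t))"
    define M'' where "M'' = Suc M - s"
    have b'': "bw W w'' M''" unfolding w''_def M''_def by (rule bw_shift[OF bw']) (use s in simp)
    have r'': "C w'' 0 = C w'' (M'' - 1)" unfolding w''_def M''_def C_shift using s by simp
    have inj'': "inj_on (C w'') {..<M'' - 1}"
    proof -
      have "inj_on (C w \<circ> (\<lambda>t. s + t)) {..<M'' - 1}"
      proof (rule comp_inj_on)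
        show "inj_on ((+) s) {..<M'' - 1}" by (simp add: inj_on_def)
        have "(+) s ` {..<M'' - 1} \<subseteq> {..<M}" unfolding M''_def using s by auto
        then show "inj_on (C w) ((+) s ` {..<M'' - 1})" by (rule inj_on_subset[OF inj])
      qed
      moreover have "\<And>t. t \<in> {..<M'' - 1} \<Longrightarrow> (C w \<circ> (\<lambda>t. s + t)) t = C w'' t"
      proof -
        fix t assume t: "t \<in> {..<M'' - 1}"
        then have "s + t < M" unfolding M''_def using s by auto
        then show "(C w \<circ> (\<lambda>t. s + t)) t = C w'' t" unfolding w''_def C_shift using Cw'[of "s + t"] by simp
      qed
      ultimately show ?thesis using inj_on_cong by blast
    qed
    have "2 \<le> M''" unfolding M''_def using s by simp
    then show False using no_rep[OF lad _ b'' r'' inj''] by blast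
  qed
  have "\<And>t. t \<in> {..<M} \<Longrightarrow> C w t = C w' t" using Cw' by simp
  then have "inj_on (C w') {..<M}" using inj inj_on_cong by blast
  then have "inj_on (C w') {..<Suc M}" using notin by (simp add: lessThan_Suc)
  then show ?case using bw' by blast
qed

lemma nobend:
  assumes fin: "finite W" and reg: "REG W k" and lad: "LAD W" and sub: "\<forall>p\<in>W. p \<subseteq> {..<n}"
    and p: "p \<in> W" "sd p {a} \<in> W" "sd p {b} \<in> W"
  shows "sd (sd p {a}) {b} \<in> W"
proof (rule ccontr)
  assume nb: "sd (sd p {a}) {b} \<notin> W"
  have "a \<noteq> b" using nb p by auto
  have c1: "card (sd (sd p {a}) p) = 1" "card (sd p (sd p {b})) = 1" by simp_all
  have c2: "sd (sd p {a}) (sd p (sd p {b})) \<notin> W" using nb by simp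
  obtain w where bw: "bw W w (n + 2)" and inj: "inj_on (C w) {..<n + 2}"
    using gen[OF fin reg lad p(2) p(1) p(3) c1 c2, of "n + 2"] by auto
  have "C w ` {..<n + 2} \<subseteq> (\<lambda>i. {i}) ` {..<n}"
  proof
    fix X assume "X \<in> C w ` {..<n + 2}"
    then obtain j where j: "j < n + 2" "X = C w j" by auto
    have "card (C w j) = 1" "w j \<in> W" "w (Suc j) \<in> W" using bw j unfolding bw_def by auto
    then obtain c where c: "C w j = {c}" using C_sing by blast
    have "c \<in> w j \<union> w (Suc j)" using c sd_sub[of "w j" "w (Suc j)"] unfolding C_def by auto
    then have "c < n" using sub \<open>w j \<in> W\<close> \<open>w (Suc j) \<in> W\<close> by auto
    then show "X \<in> (\<lambda>i. {i}) ` {..<n}" using j c by auto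
  qed
  then have "card (C w ` {..<n + 2}) \<le> card ((\<lambda>i. {i}) ` {..<n})" by (intro card_mono) auto
  also have "\<dots> \<le> n" using card_image_le[of "{..<n}" "\<lambda>i. {i}"] by simp
  finally show False using card_image[OF inj] by simp
qed

lemma nbrs_eq:
  assumes "x \<in> W"
  shows "{q\<in>W. card (sd x q) = 1} = (\<lambda>i. sd x {i}) ` {i. sd x {i} \<in> W}"
proof
  show "{q \<in> W. card (sd x q) = 1} \<subseteq> (\<lambda>i. sd x {i}) ` {i. sd x {i} \<in> W}"
  proof
    fix q assume "q \<in> {q \<in> W. card (sd x q) = 1}"
    then have q: "q \<in> W" "card (sd x q) = 1" by auto
    then obtain i where "q = sd x {i}" unfolding card1_sd by blast
    then show "q \<in> (\<lambda>i. sd x {i}) ` {i. sd x {i} \<in> W}" using q by auto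
  qed
  show "(\<lambda>i. sd x {i}) ` {i. sd x {i} \<in> W} \<subseteq> {q \<in> W. card (sd x q) = 1}" by auto
qed

lemma inj_sing: "inj_on (\<lambda>i. sd x {i}) A" by (auto simp: inj_on_def sd_sing_eq)

lemma dirs_sub:
  assumes sub: "\<forall>p\<in>W. p \<subseteq> {..<n}" and x: "x \<in> W"
  shows "{i. sd x {i} \<in> W} \<subseteq> {..<n}"
proof
  fix i assume "i \<in> {i. sd x {i} \<in> W}"
  then have "sd x {i} \<subseteq> {..<n}" "x \<subseteq> {..<n}" using sub x by auto
  moreover have "i \<in> x \<union> sd x {i}" by (auto simp: sd_def)
  ultimately show "i \<in> {..<n}" by blast
qed

lemma card_dirs:
  assumes reg: "REG W k" and sub: "\<forall>p\<in>W. p \<subseteq> {..<n}" and x: "x \<in> W"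
  shows "card {i. sd x {i} \<in> W} = k" "finite {i. sd x {i} \<in> W}"
proof -
  show f: "finite {i. sd x {i} \<in> W}" using dirs_sub[OF sub x] finite_subset by blast
  have "k = card {q\<in>W. card (sd x q) = 1}" using reg x unfolding REG_def by auto
  also have "\<dots> = card {i. sd x {i} \<in> W}" unfolding nbrs_eq[OF x] by (rule card_image[OF inj_sing])
  finally show "card {i. sd x {i} \<in> W} = k" by simp
qed

lemma cube_struct:
  assumes reg: "REG W k" and sub: "\<forall>p\<in>W. p \<subseteq> {..<n}" and v0: "v0 \<in> W"
    and nb: "\<forall>p a b. p \<in> W \<longrightarrow> sd p {a} \<in> W \<longrightarrow> sd p {b} \<in> W \<longrightarrow> sd (sd p {a}) {b} \<in> W"
  defines "I \<equiv> {i. sd v0 {i} \<in> W}"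
  shows "finite I" "card I = k" "(\<lambda>S. sd v0 S) ` Pow I \<subseteq> W"
    "\<And>x q. x \<in> (\<lambda>S. sd v0 S) ` Pow I \<Longrightarrow> q \<in> W \<Longrightarrow> card (sd x q) = 1 \<Longrightarrow> q \<in> (\<lambda>S. sd v0 S) ` Pow I"
proof -
  show fI: "finite I" and cI: "card I = k" unfolding I_def using card_dirs[OF reg sub v0] by auto
  have cl: "\<forall>S. finite S \<longrightarrow> S \<subseteq> I \<longrightarrow> sd v0 S \<in> W \<and> (\<forall>i\<in>I. sd (sd v0 S) {i} \<in> W)"
  proof (intro allI impI)
    fix S :: "nat set" assume "finite S" "S \<subseteq> I"
    then show "sd v0 S \<in> W \<and> (\<forall>i\<in>I. sd (sd v0 S) {i} \<in> W)"
    proof (induction S rule: finite_induct)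
      case empty then show ?case using v0 unfolding I_def by simp
    next
      case (insert a S)
      then have IH: "sd v0 S \<in> W" "\<forall>i\<in>I. sd (sd v0 S) {i} \<in> W" and aI: "a \<in> I" by auto
      have eq: "sd v0 (insert a S) = sd (sd v0 S) {a}" using insert.hyps(2) by (auto simp: sd_def)
      have m: "sd v0 (insert a S) \<in> W" using eq IH aI by simp
      have "\<forall>i\<in>I. sd (sd v0 (insert a S)) {i} \<in> W"
      proof
        fix i assume "i \<in> I"
        then show "sd (sd v0 (insert a S)) {i} \<in> W" unfolding eq using nb IH aI \<open>i \<in> I\<close> by blast
      qed
      then show ?case using m by blast
    qed
  qed
  show "(\<lambda>S. sd v0 S) ` Pow I \<subseteq> W"
  proof
    fix x assume "x \<in> (\<lambda>S. sd v0 S) ` Pow I"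
    then obtain S where S: "S \<subseteq> I" "x = sd v0 S" by auto
    have "finite S" using S(1) fI finite_subset by blast
    then show "x \<in> W" using cl S by blast
  qed
  fix x q assume x: "x \<in> (\<lambda>S. sd v0 S) ` Pow I" and q: "q \<in> W" and c: "card (sd x q) = 1"
  then obtain S where S: "S \<subseteq> I" "x = sd v0 S" by auto
  have fS: "finite S" using S fI finite_subset by blast
  have xW: "x \<in> W" and xI: "\<forall>i\<in>I. sd x {i} \<in> W" using cl[rule_format, OF fS S(1)] S(2) by simp_all
  have D: "I \<subseteq> {i. sd x {i} \<in> W}" using xI by auto
  have "I = {i. sd x {i} \<in> W}"
    using card_subset_eq[OF card_dirs(2)[OF reg sub xW] D] card_dirs(1)[OF reg sub xW] cI by simp
  moreover obtain i where i: "q = sd x {i}" using c unfolding card1_sd by blast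
  ultimately have iI: "i \<in> I" using q by auto
  have "q = sd v0 (sd S {i})" using i S(2) by (simp add: sd_assoc)
  moreover have "sd S {i} \<subseteq> I" using S(1) iI by (auto simp: sd_def)
  ultimately show "q \<in> (\<lambda>S. sd v0 S) ` Pow I" by blast
qed

lemma pow_iso:
  assumes fI: "finite I" and cI: "card I = k" and W: "W = (\<lambda>S. sd v0 S) ` Pow I"
  shows "\<exists>\<psi>. bij_betw \<psi> W (cube_V k) \<and> (\<forall>x\<in>W. \<forall>y\<in>W. card (sd (\<psi> x) (\<psi> y)) = card (sd x y))"
proof -
  obtain g where g: "bij_betw g I {0..<k}" using ex_bij_betw_finite_nat[OF fI] cI by blast
  then have g': "bij_betw g I {..<k}" by (simp add: atLeast0LessThan)
  have ginj: "inj_on g I" using g by (simp add: bij_betw_def)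
  have b1: "bij_betw (\<lambda>x. sd x v0) W (Pow I)"
  proof (rule bij_betw_byWitness[where f'="\<lambda>S. sd v0 S"])
    show "\<forall>a\<in>W. sd v0 (sd a v0) = a" by (simp add: sd_comm)
    show "\<forall>a\<in>Pow I. sd (sd v0 a) v0 = a" by (simp add: sd_comm)
    show "(\<lambda>x. sd x v0) ` W \<subseteq> Pow I" unfolding W by (auto simp: sd_comm)
    show "(\<lambda>S. sd v0 S) ` Pow I \<subseteq> W" unfolding W by auto
  qed
  have b2: "bij_betw (image g) (Pow I) (Pow {..<k})" by (rule bij_betw_image_Pow[OF g'])
  define \<psi> where "\<psi> = image g \<circ> (\<lambda>x. sd x v0)"
  have bij: "bij_betw \<psi> W (cube_V k)" unfolding \<psi>_def cube_V_def by (rule bij_betw_trans[OF b1 b2])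
  have sdI: "\<And>x. x \<in> W \<Longrightarrow> sd x v0 \<subseteq> I" unfolding W by (auto simp: sd_comm)
  have "\<forall>x\<in>W. \<forall>y\<in>W. card (sd (\<psi> x) (\<psi> y)) = card (sd x y)"
  proof (intro ballI)
    fix x y assume x: "x \<in> W" and y: "y \<in> W"
    let ?A = "sd x v0" and ?B = "sd y v0"
    have A: "?A \<subseteq> I" and B: "?B \<subseteq> I" using sdI x y by auto
    have d1: "g ` (?A - ?B) = g ` ?A - g ` ?B" by (rule inj_on_image_set_diff[OF ginj]) (use A B in auto)
    have d2: "g ` (?B - ?A) = g ` ?B - g ` ?A" by (rule inj_on_image_set_diff[OF ginj]) (use A B in auto)
    have "sd (g ` ?A) (g ` ?B) = (g ` ?A - g ` ?B) \<union> (g ` ?B - g ` ?A)" by (rule sd_def)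
    also have "\<dots> = g ` (?A - ?B) \<union> g ` (?B - ?A)" using d1 d2 by simp
    also have "\<dots> = g ` sd ?A ?B" by (simp only: image_Un sd_def[of ?A ?B])
    finally have "sd (g ` ?A) (g ` ?B) = g ` sd ?A ?B" .
    moreover have "card (g ` sd ?A ?B) = card (sd ?A ?B)"
      by (rule card_image[OF inj_on_subset[OF ginj]]) (use A B in \<open>auto simp: sd_def\<close>)
    moreover have "sd ?A ?B = sd x y" by (auto simp: sd_def)
    ultimately show "card (sd (\<psi> x) (\<psi> y)) = card (sd x y)" unfolding \<psi>_def by simp
  qed
  then show ?thesis using bij by blast
qed

lemma cube_regular:
  assumes "x \<in> cube_V k"
  shows "card {y \<in> cube_V k. cube_E k x y} = k"
proof -
  have "{y \<in> cube_V k. cube_E k x y} = (\<lambda>i. sd x {i}) ` {..<k}"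
  proof
    show "{y \<in> cube_V k. cube_E k x y} \<subseteq> (\<lambda>i. sd x {i}) ` {..<k}"
    proof
      fix y assume "y \<in> {y \<in> cube_V k. cube_E k x y}"
      then have y: "y \<subseteq> {..<k}" "card (sd x y) = 1" by (auto simp: cube_E_sd cube_V_def)
      then obtain i where i: "y = sd x {i}" unfolding card1_sd by blast
      have "i \<in> x \<union> y" unfolding i by (auto simp: sd_def)
      then have "i < k" using y assms by (auto simp: cube_V_def)
      then show "y \<in> (\<lambda>i. sd x {i}) ` {..<k}" using i by auto
    qed
    show "(\<lambda>i. sd x {i}) ` {..<k} \<subseteq> {y \<in> cube_V k. cube_E k x y}"
    proof
      fix y assume "y \<in> (\<lambda>i. sd x {i}) ` {..<k}"
      then obtain i where i: "i < k" "y = sd x {i}" by auto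
      have "y \<in> cube_V k" using assms i by (auto simp: cube_V_def sd_def)
      then show "y \<in> {y \<in> cube_V k. cube_E k x y}" using assms i by (simp add: cube_E_sd)
    qed
  qed
  then show ?thesis using card_image[OF inj_sing, of x "{..<k}"] by simp
qed

theorem theorem1p2:
  fixes V :: "'a set" and E :: "'a \<Rightarrow> 'a \<Rightarrow> bool" and k :: nat
  assumes "simple_graph V E"
    and "V \<noteq> {}"
    and "almost_median V E"
  shows "regular V E k \<longleftrightarrow> graph_iso V E (cube_V k) (cube_E k)"
proof
  have Es: "\<And>x y. E x y \<Longrightarrow> x \<in> V \<and> y \<in> V" using assms(1) unfolding simple_graph_def by blast
  assume reg: "regular V E k"
  obtain n W \<phi> where S: "bij_betw \<phi> V W" "W \<subseteq> cube_V n"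
    "\<forall>u\<in>V. \<forall>v\<in>V. E u v \<longleftrightarrow> card (sd (\<phi> u) (\<phi> v)) = 1"
    "\<forall>u\<in>V. \<forall>v\<in>V. gdist V E u v = enat (card (sd (\<phi> u) (\<phi> v)))"
    by (rule setup_coords[OF assms(1) assms(3)])
  interpret c: coords V E \<phi> W n by (rule coords.intro[OF S(1) S(2) S(3) S(4)]) (rule Es)
  have lad: "LAD W" using c.lad[OF assms(3)] unfolding LAD_def .
  have sub: "\<forall>p\<in>W. p \<subseteq> {..<n}" using S(2) by (auto simp: cube_V_def)
  have "finite (cube_V n)" by (simp add: cube_V_def)
  then have finW: "finite W" using S(2) finite_subset by blast
  have REG: "REG W k"
    unfolding REG_def
  proof
    fix p assume p: "p \<in> W"
    then obtain u where u: "u \<in> V" "\<phi> u = p" using c.surjW by blast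
    have "{q\<in>W. card (sd p q) = 1} = \<phi> ` {w\<in>V. E u w}"
    proof
      show "{q \<in> W. card (sd p q) = 1} \<subseteq> \<phi> ` {w \<in> V. E u w}"
      proof
        fix q assume "q \<in> {q \<in> W. card (sd p q) = 1}"
        then have q: "q \<in> W" "card (sd p q) = 1" by auto
        then obtain w where w: "w \<in> V" "\<phi> w = q" using c.surjW by blast
        then have "E u w" using c.Ecu[OF u(1) w(1)] q u by simp
        then show "q \<in> \<phi> ` {w \<in> V. E u w}" using w by blast
      qed
      show "\<phi> ` {w \<in> V. E u w} \<subseteq> {q \<in> W. card (sd p q) = 1}"
      proof
        fix q assume "q \<in> \<phi> ` {w \<in> V. E u w}"
        then obtain w where w: "w \<in> V" "E u w" "q = \<phi> w" by blast
        then show "q \<in> {q \<in> W. card (sd p q) = 1}" using c.Ecu[OF u(1) w(1)] c.inW[OF w(1)] u by simp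
      qed
    qed
    moreover have "inj_on \<phi> V" using S(1) by (simp add: bij_betw_def)
    then have "inj_on \<phi> {w\<in>V. E u w}" by (rule inj_on_subset) blast
    ultimately have "card {q\<in>W. card (sd p q) = 1} = card {w\<in>V. E u w}" by (simp add: card_image)
    also have "\<dots> = k" using reg u unfolding regular_def by blast
    finally show "card {q\<in>W. card (sd p q) = 1} = k" .
  qed
  have nb: "\<forall>p a b. p \<in> W \<longrightarrow> sd p {a} \<in> W \<longrightarrow> sd p {b} \<in> W \<longrightarrow> sd (sd p {a}) {b} \<in> W"
    by (intro allI impI) (rule nobend[OF finW REG lad sub])
  obtain u0 where u0: "u0 \<in> V" using assms(2) by blast
  define v0 where "v0 = \<phi> u0"
  have v0W: "v0 \<in> W" unfolding v0_def by (rule c.inW[OF u0])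
  define I where "I = {i. sd v0 {i} \<in> W}"
  note st = cube_struct[OF REG sub v0W nb, folded I_def]
  let ?P = "(\<lambda>S. sd v0 S) ` Pow I"
  have conn: "connected_graph V E" using assms(3) unfolding almost_median_def partial_cube_def by blast
  have walkP: "\<And>m x. walk V E x w m \<Longrightarrow> \<phi> x \<in> ?P \<Longrightarrow> \<phi> w \<in> ?P" for w
  proof -
    fix m x show "walk V E x w m \<Longrightarrow> \<phi> x \<in> ?P \<Longrightarrow> \<phi> w \<in> ?P"
    proof (induction m arbitrary: x)
      case 0 then show ?case by (simp add: walk_0)
    next
      case (Suc m)
      then obtain z where z: "x \<in> V" "E x z" "walk V E z w m" by (auto simp: walk_Suc)
      have zV: "z \<in> V" using Es[OF z(2)] by simp
      have "card (sd (\<phi> x) (\<phi> z)) = 1" using c.Ecu[OF z(1) zV] z(2) by simp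
      then have "\<phi> z \<in> ?P" using st(4)[OF Suc.prems(2) c.inW[OF zV]] by blast
      then show ?case using Suc.IH z(3) by blast
    qed
  qed
  have WP: "W = ?P"
  proof
    show "?P \<subseteq> W" by (rule st(3))
    show "W \<subseteq> ?P"
    proof
      fix q assume "q \<in> W"
      then obtain w where w: "w \<in> V" "\<phi> w = q" using c.surjW by blast
      obtain m where "walk V E u0 w m" using conn u0 w(1) unfolding connected_graph_def by blast
      moreover have "\<phi> u0 = sd v0 {}" "{} \<in> Pow I" using v0_def by simp_all
      then have "\<phi> u0 \<in> ?P" by blast
      ultimately show "q \<in> ?P" using walkP w(2) by blast
    qed
  qed
  obtain \<psi> where psi: "bij_betw \<psi> W (cube_V k)" "\<forall>x\<in>W. \<forall>y\<in>W. card (sd (\<psi> x) (\<psi> y)) = card (sd x y)"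
    using pow_iso[OF st(1) st(2) WP] by blast
  show "graph_iso V E (cube_V k) (cube_E k)"
    unfolding graph_iso_def
  proof (intro exI conjI)
    show "bij_betw (\<psi> \<circ> \<phi>) V (cube_V k)" by (rule bij_betw_trans[OF S(1) psi(1)])
    show "\<forall>u\<in>V. \<forall>v\<in>V. E u v \<longleftrightarrow> cube_E k ((\<psi> \<circ> \<phi>) u) ((\<psi> \<circ> \<phi>) v)"
    proof (intro ballI)
      fix u v assume u: "u \<in> V" and v: "v \<in> V"
      have m: "\<psi> (\<phi> u) \<in> cube_V k" "\<psi> (\<phi> v) \<in> cube_V k"
        using psi(1) c.inW[OF u] c.inW[OF v] unfolding bij_betw_def by auto
      have "card (sd (\<psi> (\<phi> u)) (\<psi> (\<phi> v))) = card (sd (\<phi> u) (\<phi> v))"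
        using psi(2) c.inW[OF u] c.inW[OF v] by blast
      then show "E u v \<longleftrightarrow> cube_E k ((\<psi> \<circ> \<phi>) u) ((\<psi> \<circ> \<phi>) v)"
        using c.Ecu[OF u v] m by (simp add: cube_E_sd)
    qed
  qed
next
  assume "graph_iso V E (cube_V k) (cube_E k)"
  then obtain f where f: "bij_betw f V (cube_V k)" "\<forall>u\<in>V. \<forall>v\<in>V. E u v \<longleftrightarrow> cube_E k (f u) (f v)"
    unfolding graph_iso_def by blast
  show "regular V E k"
    unfolding regular_def
  proof
    fix v assume v: "v \<in> V"
    have fv: "f v \<in> cube_V k" using f(1) v unfolding bij_betw_def by blast
    have "f ` {w\<in>V. E v w} = {y \<in> cube_V k. cube_E k (f v) y}"
    proof
      show "f ` {w \<in> V. E v w} \<subseteq> {y \<in> cube_V k. cube_E k (f v) y}"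
      proof
        fix y assume "y \<in> f ` {w \<in> V. E v w}"
        then obtain w where w: "w \<in> V" "E v w" "y = f w" by blast
        have "f w \<in> cube_V k" using f(1) w(1) unfolding bij_betw_def by blast
        moreover have "cube_E k (f v) (f w)" using f(2) v w by blast
        ultimately show "y \<in> {y \<in> cube_V k. cube_E k (f v) y}" using w by blast
      qed
      show "{y \<in> cube_V k. cube_E k (f v) y} \<subseteq> f ` {w \<in> V. E v w}"
      proof
        fix y assume y: "y \<in> {y \<in> cube_V k. cube_E k (f v) y}"
        have "y \<in> f ` V" using y f(1) unfolding bij_betw_def by blast
        then obtain w where w: "w \<in> V" "y = f w" by blast
        then have "E v w" using f(2) v y by blast
        then show "y \<in> f ` {w \<in> V. E v w}" using w by blast
      qed
    qed
    moreover have "inj_on f V" using f(1) by (simp add: bij_betw_def)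
    then have "inj_on f {w\<in>V. E v w}" by (rule inj_on_subset) blast
    ultimately have "card {w\<in>V. E v w} = card {y \<in> cube_V k. cube_E k (f v) y}"
      by (metis card_image)
    then show "card {w\<in>V. E v w} = k" using cube_regular[OF fv] by simp
  qed
qed

end
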